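(* Let $W$ be a channel from $\{1,2,3\}$ to $\{1,2\}$. If the six entries $W_{i,j}$ are pairwise distinct and each column sum of $W$ is at least $1$, then $\overline{C}_{01}(W)<\overline{C}_{11}(W)$.
   Context: A channel is a row-stochastic matrix. With $\mathcal{X}=\{1,2,3\}$, $\mathcal{Y}=\{1,2\}$, a deterministic channel is a 0-1 channel (a map $D:\mathcal{X}\to\mathcal{Y}$); $\mathcal{D}$ is the set of them, $\mathrm{rank}(D)$ the matrix rank. $\Lambda(W)=\{\lambda\text{ probability distribution on }\mathcal{D}: W=\sum_D\lambda_DD\}$. $I(\mu,K)=\sum_x\mu_xD(K_{x,*}\|\mu K)$ (KL divergence, base 2). $C_{11}(\lambda)=\sum_D\lambda_D\log_2\mathrm{rank}(D)$, $C_{01}(\lambda)=\max_\mu\sum_D\lambda_D I(\mu,D)$ over distributions $\mu$ on $\mathcal{X}$. $\overline{C}_f(W)=\sup_{\lambda\in\Lambda(W)}C_f(\lambda)$ for $f\in\{01,11\}$. *)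

theory Defs
  imports "HOL-Analysis.Analysis"
begin

text \<open>Input alphabet X = {1,2,3} is the type 3, output alphabet Y = {1,2} is the type 2.
  A channel is a row-stochastic real matrix of type real^2^3 (rows indexed by inputs).\<close>

definition channel :: "real^2^3 \<Rightarrow> bool" where
  "channel W \<longleftrightarrow> (\<forall>x y. W$x$y \<ge> 0) \<and> (\<forall>x. (\<Sum>y\<in>UNIV. W$x$y) = 1)"

definition det_channels :: "(real^2^3) set" where
  "det_channels = {D. channel D \<and> (\<forall>x y. D$x$y = 0 \<or> D$x$y = 1)}"

definition Lambda :: "real^2^3 \<Rightarrow> ((real^2^3) \<Rightarrow> real) set" where
  "Lambda W = {l. (\<forall>D. l D \<ge> 0) \<and> (\<forall>D. D \<notin> det_channels \<longrightarrow> l D = 0)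
      \<and> (\<Sum>D\<in>det_channels. l D) = 1
      \<and> W = (\<Sum>D\<in>det_channels. l D *\<^sub>R D)}"

definition input_dists :: "(real^3) set" where
  "input_dists = {\<mu>. (\<forall>x. \<mu>$x \<ge> 0) \<and> (\<Sum>x\<in>UNIV. \<mu>$x) = 1}"

definition out_dist :: "real^3 \<Rightarrow> real^2^3 \<Rightarrow> real^2" where
  "out_dist \<mu> K = (\<chi> y. \<Sum>x\<in>UNIV. \<mu>$x * K$x$y)"

definition KL :: "real^2 \<Rightarrow> real^2 \<Rightarrow> real" where
  "KL p q = (\<Sum>y\<in>UNIV. if p$y = 0 then 0 else p$y * log 2 (p$y / q$y))"

definition mutual_info :: "real^3 \<Rightarrow> real^2^3 \<Rightarrow> real" where
  "mutual_info \<mu> K = (\<Sum>x\<in>UNIV. if \<mu>$x = 0 then 0 else \<mu>$x * KL (K$x) (out_dist \<mu> K))"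

definition C11 :: "((real^2^3) \<Rightarrow> real) \<Rightarrow> real" where
  "C11 l = (\<Sum>D\<in>det_channels. l D * log 2 (real (rank D)))"

text \<open>The maximum over mu is attained (compact simplex, continuous objective); we write it as Sup.\<close>
definition C01 :: "((real^2^3) \<Rightarrow> real) \<Rightarrow> real" where
  "C01 l = (SUP \<mu>\<in>input_dists. \<Sum>D\<in>det_channels. l D * mutual_info \<mu> D)"

definition C11_bar :: "real^2^3 \<Rightarrow> real" where
  "C11_bar W = (SUP l\<in>Lambda W. C11 l)"

definition C01_bar :: "real^2^3 \<Rightarrow> real" where
  "C01_bar W = (SUP l\<in>Lambda W. C01 l)"

end

theory Submission
  imports Defs
begin

type_synonym tri = "bool \<times> bool \<times> bool"

definition bit :: "tri \<Rightarrow> 3 \<Rightarrow> bool" where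
  "bit t x = (if x = 1 then fst t else if x = 2 then fst (snd t) else snd (snd t))"

definition M :: "tri \<Rightarrow> real^2^3" where
  "M t = (\<chi> x y. if y = 1 then (if bit t x then 1 else 0) else (if bit t x then 0 else 1))"

lemma bit_simps [simp]: "bit t 1 = fst t" "bit t 2 = fst (snd t)" "bit t 3 = snd (snd t)"
  by (auto simp: bit_def)

lemma M_simps [simp]: "M t $ x $ 1 = (if bit t x then 1 else 0)" "M t $ x $ 2 = (if bit t x then 0 else 1)"
  by (auto simp: M_def)

lemma sum_tri: "(\<Sum>t\<in>(UNIV::tri set). g t) =
  g (True,True,True) + g (True,True,False) + g (True,False,True) + g (True,False,False) +
  g (False,True,True) + g (False,True,False) + g (False,False,True) + g (False,False,False)"
proof -
  have U: "(UNIV::tri set) = {(True,True,True), (True,True,False), (True,False,True), (True,False,False),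
    (False,True,True), (False,True,False), (False,False,True), (False,False,False)}" (is "_ = ?U") by auto
  show ?thesis by (subst U) (simp add: ac_simps)
qed

lemma inj_M: "inj M"
proof
  fix s t assume "M s = M t"
  then have "\<forall>x. bit s x = bit t x"
    by (metis M_simps(1) zero_neq_one)
  then have "fst s = fst t" "fst (snd s) = fst (snd t)" "snd (snd s) = snd (snd t)"
    by (metis bit_simps)+
  then show "s = t" by (simp add: prod_eq_iff)
qed

lemma det_eq: "det_channels = range M"
proof
  show "det_channels \<subseteq> range M"
  proof
    fix D assume D: "D \<in> det_channels"
    define t where "t = (D$1$1 = 1, D$2$1 = 1, D$3$1 = 1)"
    have "D = M t"
    proof (rule iffD2[OF vec_eq_iff], rule allI)
      fix x :: 3
      have r: "D$x$1 + D$x$2 = 1" and b: "D$x$1 = 0 \<or> D$x$1 = 1" "D$x$2 = 0 \<or> D$x$2 = 1"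
        using D by (auto simp: det_channels_def channel_def sum_2)
      have "bit t x = (D$x$1 = 1)" using exhaust_3[of x] by (auto simp: t_def)
      then show "D $ x = M t $ x" unfolding vec_eq_iff forall_2 using r b by auto
    qed
    then show "D \<in> range M" by blast
  qed
  show "range M \<subseteq> det_channels"
    by (auto simp: det_channels_def channel_def sum_2 forall_2 split: if_splits)
qed

lemma sum_det: "(\<Sum>D\<in>det_channels. g D) = (\<Sum>t\<in>UNIV. g (M t))"
  unfolding det_eq by (simp add: sum.reindex inj_M)

lemma finite_det: "finite det_channels" unfolding det_eq by simp


definition hb :: "real \<Rightarrow> real" where
  "hb p = p * log 2 (1/p) + (1-p) * log 2 (1/(1-p))"

lemma lin_aux: "(A::real) \<le> L1 + a - 2*p \<Longrightarrow> B \<le> L2 + b - 2*(1-p) \<Longrightarrow> L1 + L2 = L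
  \<Longrightarrow> A + B \<le> L - (2 - a - b)" by (simp add: algebra_simps)

lemma hb_bound:
  assumes "0 \<le> p" "p \<le> 1"
  shows "hb p \<le> 1 - (1 - 2*p)^2/4"
proof (cases "p = 0 \<or> p = 1")
  case True then show ?thesis by (auto simp: hb_def)
next
  case False
  then have p0: "0 < p" and p1: "p < 1" using assms by auto
  define a where "a = sqrt (2*p)"
  define b where "b = sqrt (2*(1-p))"
  have a0: "a > 0" and b0: "b > 0" using p0 p1 by (auto simp: a_def b_def)
  have a2: "a^2 = 2*p" and b2: "b^2 = 2*(1-p)" using p0 p1 by (auto simp: a_def b_def)
  have key: "q * ln (1/q) \<le> q * ln 2 + c - 2*q" if q0: "q > 0" and c0: "c > 0" and c2: "c^2 = 2*q" for q c :: real
  proof -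
    have "1/q = 2 * (1/c)^2" using c2 q0 c0 by (simp add: field_simps power2_eq_square)
    then have "ln (1/q) = ln 2 + 2 * ln (1/c)" using c0 by (simp add: ln_mult ln_realpow)
    moreover have "ln (1/c) \<le> 1/c - 1" using c0 by (intro ln_le_minus_one) simp
    ultimately have "ln (1/q) \<le> ln 2 + 2 * (1/c - 1)" by (simp add: algebra_simps)
    then have "q * ln (1/q) \<le> q * (ln 2 + 2 * (1/c - 1))" using q0 by (intro mult_left_mono) auto
    also have "\<dots> = q * ln 2 + c - 2*q" using c2 c0 by (simp add: field_simps power2_eq_square)
    finally show ?thesis .
  qed
  have k1: "p * ln (1/p) \<le> p * ln 2 + a - 2*p" using key[OF p0 a0 a2] .
  have k2: "(1-p) * ln (1/(1-p)) \<le> (1-p) * ln 2 + b - 2*(1-p)" using key[of "1-p" b] p1 b0 b2 by simp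
  define X where "X = 2 - a - b"
  define s where "s = a + b"
  define r where "r = a * b"
  have h1: "2 - s \<ge> (4 - s^2)/4" using zero_le_power2[of "s - 2"] by (simp add: power2_eq_square algebra_simps field_simps)
  have h2: "s^2 = 2 + 2*r" using a2 b2 unfolding s_def r_def by (simp add: power2_eq_square algebra_simps)
  have h3: "2 - 2*r \<ge> 1 - r^2" using zero_le_power2[of "1 - r"] by (simp add: power2_eq_square algebra_simps)
  have h4: "r^2 = 4*p*(1-p)" using a2 b2 unfolding r_def by (simp add: power_mult_distrib)
  have h5: "(1 - 2*p)^2 = 1 - 4*p*(1-p)" by (simp add: power2_eq_square algebra_simps)
  have "(1 - 2*p)^2/4 = (1 - r^2)/4" using h4 h5 by simp
  also have "\<dots> \<le> (2 - 2*r)/4" using h3 by simp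
  also have "\<dots> = (4 - s^2)/4" using h2 by simp
  also have "\<dots> \<le> X" using h1 unfolding X_def s_def by simp
  finally have X: "X \<ge> (1 - 2*p)^2/4" .
  have ln2: "0 < ln (2::real)" "ln (2::real) \<le> 1"
    using ln_le_minus_one[of 2] by auto
  have "hb p = (p * ln (1/p) + (1-p) * ln (1/(1-p))) / ln 2"
    by (simp add: hb_def log_def field_simps)
  also have "\<dots> \<le> (ln 2 - X) / ln 2"
  proof (rule divide_right_mono)
    have e: "p * ln 2 + (1-p) * ln 2 = ln 2" by (simp add: algebra_simps)
    show "p * ln (1/p) + (1-p) * ln (1/(1-p)) \<le> ln 2 - X"
      using lin_aux[OF k1 k2 e] unfolding X_def .
  qed (use ln2 in auto)
  also have "\<dots> = 1 - X / ln 2" using ln2 by (simp add: field_simps)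
  also have "\<dots> \<le> 1 - X"
  proof -
    have "X \<ge> 0" using X zero_le_power2[of "1-2*p"] by linarith
    then have "X * ln 2 \<le> X" using ln2 mult_left_le by blast
    then have "X \<le> X / ln 2" using ln2 by (simp add: le_divide_eq)
    then show ?thesis by simp
  qed
  finally show ?thesis using X by simp
qed


definition pt :: "real^3 \<Rightarrow> tri \<Rightarrow> real" where
  "pt \<mu> t = (\<Sum>x\<in>UNIV. \<mu>$x * (if bit t x then 1 else 0))"

lemma sum_split: "(\<Sum>x\<in>UNIV. \<mu>$x * (if bit t x then L1 else L2)) =
   pt \<mu> t * L1 + ((\<Sum>x\<in>UNIV. \<mu>$x) - pt \<mu> t) * L2"
  by (simp add: pt_def sum_3 algebra_simps)

lemma MI:
  assumes "\<mu> \<in> input_dists"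
  shows "mutual_info \<mu> (M t) = hb (pt \<mu> t)"
proof -
  define q where "q = out_dist \<mu> (M t)"
  have q1: "q$1 = pt \<mu> t" by (simp add: q_def out_dist_def pt_def)
  have s1: "(\<Sum>x\<in>UNIV. \<mu>$x) = 1" using assms by (simp add: input_dists_def)
  have q2: "q$2 = 1 - pt \<mu> t" using s1 by (simp add: q_def out_dist_def pt_def sum_3 algebra_simps)
  have KL: "KL (M t $ x) q = (if bit t x then log 2 (1 / pt \<mu> t) else log 2 (1 / (1 - pt \<mu> t)))" for x
    by (simp add: KL_def sum_2 q1 q2)
  have "mutual_info \<mu> (M t) = (\<Sum>x\<in>UNIV. \<mu>$x * (if bit t x then log 2 (1 / pt \<mu> t) else log 2 (1 / (1 - pt \<mu> t))))"
    unfolding mutual_info_def q_def[symmetric] KL by (rule sum.cong) auto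
  also have "\<dots> = pt \<mu> t * log 2 (1 / pt \<mu> t) + (1 - pt \<mu> t) * log 2 (1 / (1 - pt \<mu> t))"
    unfolding sum_split s1 ..
  finally show ?thesis by (simp add: hb_def)
qed


lemma comb:
  fixes c :: "tri \<Rightarrow> real" and \<mu> :: "real^3"
  assumes c0: "\<forall>t. c t \<ge> 0" and cs: "(\<Sum>t\<in>UNIV. c t) = 1"
    and A1: "a1 = (\<Sum>t\<in>UNIV. c t * (if bit t 1 then 1 else 0))"
    and A2: "a2 = (\<Sum>t\<in>UNIV. c t * (if bit t 2 then 1 else 0))"
    and A3: "a3 = (\<Sum>t\<in>UNIV. c t * (if bit t 3 then 1 else 0))"
    and m0: "\<forall>x. \<mu>$x \<ge> 0" and ms: "(\<Sum>x\<in>UNIV. \<mu>$x) = 1"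
  shows "(\<Sum>t\<in>UNIV. c t * (1 - 2 * pt \<mu> t)^2) \<ge> min \<bar>a1+a2-1\<bar> (min \<bar>a1+a3-1\<bar> \<bar>a2+a3-1\<bar>) / 9"
proof -
  let ?T = "True" and ?F = "False"
  define S where "S = (\<Sum>t\<in>UNIV. c t * (1 - 2 * pt \<mu> t)^2)"
  have nn: "0 \<le> c t * (1 - 2 * pt \<mu> t)^2" for t by (metis c0 mult_nonneg_nonneg zero_le_power2)
  have ms3: "\<mu>$1 + \<mu>$2 + \<mu>$3 = 1" using ms by (simp add: sum_3)
  have S_eq: "S = c (True,True,True) * (1 - 2 * pt \<mu> (True,True,True))^2 + c (True,True,False) * (1 - 2 * pt \<mu> (True,True,False))^2
     + c (True,False,True) * (1 - 2 * pt \<mu> (True,False,True))^2 + c (True,False,False) * (1 - 2 * pt \<mu> (True,False,False))^2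
     + c (False,True,True) * (1 - 2 * pt \<mu> (False,True,True))^2 + c (False,True,False) * (1 - 2 * pt \<mu> (False,True,False))^2
     + c (False,False,True) * (1 - 2 * pt \<mu> (False,False,True))^2 + c (False,False,False) * (1 - 2 * pt \<mu> (False,False,False))^2"
    unfolding S_def sum_tri ..
  have pTTT: "pt \<mu> (True,True,True) = 1" and pFFF: "pt \<mu> (False,False,False) = 0"
    using ms3 by (simp_all add: pt_def sum_3)
  have p1: "pt \<mu> (True,False,False) = \<mu>$1" "pt \<mu> (False,True,True) = 1 - \<mu>$1"
   and p2: "pt \<mu> (False,True,False) = \<mu>$2" "pt \<mu> (True,False,True) = 1 - \<mu>$2"
   and p3: "pt \<mu> (False,False,True) = \<mu>$3" "pt \<mu> (True,True,False) = 1 - \<mu>$3"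
    using ms3 by (simp_all add: pt_def sum_3 algebra_simps)
  have sq: "(1 - 2 * (1 - y))^2 = (1 - 2*y)^2" for y :: real by (simp add: power2_eq_square algebra_simps)
  have big: "c t * (1 - 2*y)^2 \<ge> c t / 9" if "(1 - 2*y)^2 \<ge> 1/9" for t y
    using mult_left_mono[OF that, of "c t"] c0 by simp
  have csum: "c (True,True,True) + c (True,True,False) + c (True,False,True) + c (True,False,False)
     + c (False,True,True) + c (False,True,False) + c (False,False,True) + c (False,False,False) = 1"
    using cs unfolding sum_tri .
  have a1e: "a1 = c (True,True,True) + c (True,True,False) + c (True,False,True) + c (True,False,False)"
    using A1 unfolding sum_tri by simp
  have a2e: "a2 = c (True,True,True) + c (True,True,False) + c (False,True,True) + c (False,True,False)"
    using A2 unfolding sum_tri by simp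
  have a3e: "a3 = c (True,True,True) + c (True,False,True) + c (False,True,True) + c (False,False,True)"
    using A3 unfolding sum_tri by simp
  have c0': "c (True,True,True) \<ge> 0" "c (False,False,False) \<ge> 0" "c (True,True,False) \<ge> 0" "c (True,False,True) \<ge> 0"
    "c (True,False,False) \<ge> 0" "c (False,True,True) \<ge> 0" "c (False,True,False) \<ge> 0" "c (False,False,True) \<ge> 0"
    using c0 by auto
  have "(1 - 2*\<mu>$1)^2 \<ge> 1/9 \<or> (1 - 2*\<mu>$2)^2 \<ge> 1/9 \<or> (1 - 2*\<mu>$3)^2 \<ge> 1/9"
  proof (rule ccontr)
    assume "\<not> ?thesis"
    then have "(1 - 2*\<mu>$i)^2 < (1/3)^2" if "i \<in> {1,2,3}" for i using that by (auto simp: power2_eq_square)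
    then have "\<bar>1 - 2*\<mu>$i\<bar> < 1/3" if "i \<in> {1,2,3}" for i using that
      by (metis abs_of_pos power2_abs power_less_imp_less_base zero_less_divide_1_iff zero_less_numeral abs_ge_zero)
    then have "\<bar>1 - 2*\<mu>$1\<bar> < 1/3" "\<bar>1 - 2*\<mu>$2\<bar> < 1/3" "\<bar>1 - 2*\<mu>$3\<bar> < 1/3" by auto
    then have "\<mu>$1 > 1/3" "\<mu>$2 > 1/3" "\<mu>$3 > 1/3" unfolding abs_less_iff by linarith+
    then show False using ms3 by linarith
  qed
  then have "S \<ge> \<bar>a2+a3-1\<bar>/9 \<or> S \<ge> \<bar>a1+a3-1\<bar>/9 \<or> S \<ge> \<bar>a1+a2-1\<bar>/9"
  proof (elim disjE)
    assume h: "(1 - 2*\<mu>$1)^2 \<ge> 1/9"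
    have "S \<ge> c (True,True,True) + c (False,False,False) + c (True,False,False)/9 + c (False,True,True)/9"
      using S_eq nn[of "(True,True,False)"] nn[of "(True,False,True)"] nn[of "(False,True,False)"] nn[of "(False,False,True)"]
        big[OF h, of "(True,False,False)"] big[of "1 - \<mu>$1" "(False,True,True)"] h sq[of "\<mu>$1"]
      by (simp add: p1 pTTT pFFF)
    moreover have "\<bar>a2+a3-1\<bar> \<le> c (True,True,True) + c (False,False,False) + c (True,False,False) + c (False,True,True)"
      using a2e a3e csum c0' unfolding abs_le_iff by linarith
    ultimately show ?thesis using c0' by simp
  next
    assume h: "(1 - 2*\<mu>$2)^2 \<ge> 1/9"
    have "S \<ge> c (True,True,True) + c (False,False,False) + c (False,True,False)/9 + c (True,False,True)/9"
      using S_eq nn[of "(True,True,False)"] nn[of "(False,True,True)"] nn[of "(True,False,False)"] nn[of "(False,False,True)"]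
        big[OF h, of "(False,True,False)"] big[of "1 - \<mu>$2" "(True,False,True)"] h sq[of "\<mu>$2"]
      by (simp add: p2 pTTT pFFF)
    moreover have "\<bar>a1+a3-1\<bar> \<le> c (True,True,True) + c (False,False,False) + c (False,True,False) + c (True,False,True)"
      using a1e a3e csum c0' unfolding abs_le_iff by linarith
    ultimately show ?thesis using c0' by simp
  next
    assume h: "(1 - 2*\<mu>$3)^2 \<ge> 1/9"
    have "S \<ge> c (True,True,True) + c (False,False,False) + c (False,False,True)/9 + c (True,True,False)/9"
      using S_eq nn[of "(True,False,True)"] nn[of "(False,True,True)"] nn[of "(True,False,False)"] nn[of "(False,True,False)"]
        big[OF h, of "(False,False,True)"] big[of "1 - \<mu>$3" "(True,True,False)"] h sq[of "\<mu>$3"]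
      by (simp add: p3 pTTT pFFF)
    moreover have "\<bar>a1+a2-1\<bar> \<le> c (True,True,True) + c (False,False,False) + c (False,False,True) + c (True,True,False)"
      using a1e a2e csum c0' unfolding abs_le_iff by linarith
    ultimately show ?thesis using c0' by simp
  qed
  then show ?thesis unfolding S_def[symmetric] by auto
qed


lemma rank_le2: "rank (A::real^2^3) \<le> 2"
  using rank_bound[of A] by simp

lemma log_rank_le: "log 2 (real (rank (A::real^2^3))) \<le> 1"
proof -
  have "rank A = 0 \<or> rank A = 1 \<or> rank A = 2" using rank_le2[of A] by linarith
  then show ?thesis by (auto simp: log_def)
qed

lemma rank_M2:
  assumes "bit t x" "\<not> bit t y"
  shows "rank (M t) = 2"
proof -
  have "inj ((*v) (M t))"
  proof
    fix v w :: "real^2" assume h: "M t *v v = M t *v w"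
    have "(M t *v v)$x = v$1" "(M t *v w)$x = w$1" "(M t *v v)$y = v$2" "(M t *v w)$y = w$2"
      using assms by (simp_all add: matrix_vector_mult_def sum_2)
    then show "v = w" using h unfolding vec_eq_iff forall_2 by metis
  qed
  then show ?thesis using full_rank_injective[of "M t"] by simp
qed

lemma Lambda_facts:
  assumes "l \<in> Lambda W"
  shows "\<forall>t. l (M t) \<ge> 0" "(\<Sum>t\<in>UNIV. l (M t)) = 1"
    "\<And>x. W$x$1 = (\<Sum>t\<in>UNIV. l (M t) * (if bit t x then 1 else 0))"
proof -
  show "\<forall>t. l (M t) \<ge> 0" using assms by (simp add: Lambda_def)
  show "(\<Sum>t\<in>UNIV. l (M t)) = 1" using assms by (simp add: Lambda_def sum_det)
  fix x
  have "W = (\<Sum>t\<in>UNIV. l (M t) *\<^sub>R M t)" using assms by (simp add: Lambda_def sum_det)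
  then have "W$x$1 = (\<Sum>t\<in>UNIV. l (M t) * (M t $ x $ 1))" by simp
  then show "W$x$1 = (\<Sum>t\<in>UNIV. l (M t) * (if bit t x then 1 else 0))" by simp
qed

lemma C11_le: assumes "l \<in> Lambda W" shows "C11 l \<le> 1"
proof -
  have "C11 l = (\<Sum>t\<in>UNIV. l (M t) * log 2 (real (rank (M t))))" by (simp add: C11_def sum_det)
  also have "\<dots> \<le> (\<Sum>t\<in>UNIV. l (M t))"
    using Lambda_facts(1)[OF assms] log_rank_le by (intro sum_mono) (metis mult_left_le)
  finally show ?thesis using Lambda_facts(2)[OF assms] by simp
qed

lemma pt_range: assumes "\<mu> \<in> input_dists" shows "0 \<le> pt \<mu> t" "pt \<mu> t \<le> 1"
proof -
  have m: "\<mu>$1 \<ge> 0" "\<mu>$2 \<ge> 0" "\<mu>$3 \<ge> 0" "\<mu>$1 + \<mu>$2 + \<mu>$3 = 1"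
    using assms by (auto simp: input_dists_def sum_3)
  then show "0 \<le> pt \<mu> t" "pt \<mu> t \<le> 1" by (auto simp: pt_def sum_3)
qed


lemma wit_nums:
  fixes a1 a2 a3 :: real
  assumes "0 \<le> a1" "a1 \<le> 1" "0 \<le> a2" "a2 \<le> 1" "0 \<le> a3" "a3 \<le> 1"
    "1 \<le> a1 + a2 + a3" "a1 + a2 + a3 \<le> 2"
  defines "T \<equiv> a1 + a2 + a3 - 1"
  defines "r1 \<equiv> max 0 (T - a1)" and "r2 \<equiv> max 0 (T - a2)" and "r3 \<equiv> max 0 (T - a3)"
  defines "e \<equiv> (T - (r1 + r2 + r3)) / 3"
  shows "e \<ge> 0" "r1 \<ge> 0" "r2 \<ge> 0" "r3 \<ge> 0"
    "a1 - (r3 + e) - (r2 + e) \<ge> 0" "a2 - (r3 + e) - (r1 + e) \<ge> 0" "a3 - (r2 + e) - (r1 + e) \<ge> 0"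
proof -
  have R: "r1 + r2 + r3 \<le> T"
    unfolding r1_def r2_def r3_def max_def using assms(1-8) unfolding T_def by auto
  then show "e \<ge> 0" unfolding e_def by simp
  show "r1 \<ge> 0" "r2 \<ge> 0" "r3 \<ge> 0" unfolding r1_def r2_def r3_def by auto
  have "r1 \<ge> T - a1" "r2 \<ge> T - a2" "r3 \<ge> T - a3" unfolding r1_def r2_def r3_def by auto
  then show "a1 - (r3 + e) - (r2 + e) \<ge> 0" "a2 - (r3 + e) - (r1 + e) \<ge> 0" "a3 - (r2 + e) - (r1 + e) \<ge> 0"
    using R unfolding e_def by auto
qed


lemma witness:
  assumes ch: "channel W" and cs: "\<forall>y. (\<Sum>x\<in>UNIV. W$x$y) \<ge> 1"
  shows "\<exists>l\<in>Lambda W. C11 l = 1"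
proof -
  define a1 where "a1 = W$1$1"
  define a2 where "a2 = W$2$1"
  define a3 where "a3 = W$3$1"
  have row: "W$x$2 = 1 - W$x$1" "W$x$1 \<ge> 0" "W$x$2 \<ge> 0" for x
    using ch by (auto simp: channel_def sum_2 algebra_simps)
  have b: "0 \<le> a1" "a1 \<le> 1" "0 \<le> a2" "a2 \<le> 1" "0 \<le> a3" "a3 \<le> 1"
    unfolding a1_def a2_def a3_def using row[of 1] row[of 2] row[of 3] by auto
  have s1: "1 \<le> a1 + a2 + a3" using cs[rule_format, of 1] by (simp add: sum_3 a1_def a2_def a3_def)
  have s2: "a1 + a2 + a3 \<le> 2" using cs[rule_format, of 2] by (simp add: sum_3 a1_def a2_def a3_def row(1))
  define T where "T = a1 + a2 + a3 - 1"
  define r1 where "r1 = max 0 (T - a1)"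
  define r2 where "r2 = max 0 (T - a2)"
  define r3 where "r3 = max 0 (T - a3)"
  define e where "e = (T - (r1 + r2 + r3)) / 3"
  note wn = wit_nums[OF b s1 s2, folded T_def, folded r1_def r2_def r3_def, folded e_def]
  define p12 where "p12 = r3 + e"
  define p13 where "p13 = r2 + e"
  define p23 where "p23 = r1 + e"
  define q1 where "q1 = a1 - p12 - p13"
  define q2 where "q2 = a2 - p12 - p23"
  define q3 where "q3 = a3 - p13 - p23"
  have nn: "p12 \<ge> 0" "p13 \<ge> 0" "p23 \<ge> 0" "q1 \<ge> 0" "q2 \<ge> 0" "q3 \<ge> 0"
    using wn unfolding p12_def p13_def p23_def q1_def q2_def q3_def by auto
  have psum: "p12 + p13 + p23 = T" unfolding p12_def p13_def p23_def e_def by (simp add: field_simps)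
  define cw :: "tri \<Rightarrow> real" where "cw t = (if t = (False,True,True) then p23 else if t = (True,False,True) then p13
    else if t = (True,True,False) then p12 else if t = (True,False,False) then q1
    else if t = (False,True,False) then q2 else if t = (False,False,True) then q3 else 0)" for t
  have cw_nn: "cw t \<ge> 0" for t using nn unfolding cw_def by auto
  define dec :: "real^2^3 \<Rightarrow> tri" where "dec D = (D$1$1 = 1, D$2$1 = 1, D$3$1 = 1)" for D
  define l where "l D = (if D \<in> det_channels then cw (dec D) else 0)" for D
  have lM: "l (M t) = cw t" for t
  proof -
    have "M t \<in> det_channels" unfolding det_eq by simp
    moreover have "dec (M t) = t" by (simp add: dec_def prod_eq_iff)
    ultimately show ?thesis by (simp add: l_def)
  qed
  have sum1: "(\<Sum>t\<in>UNIV. cw t) = 1"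
    unfolding sum_tri cw_def using psum unfolding q1_def q2_def q3_def T_def by simp
  have comp: "(\<Sum>t\<in>UNIV. cw t * (if bit t x then 1 else 0)) = W$x$1" for x
  proof -
    have "x = 1 \<or> x = 2 \<or> x = 3" by (rule exhaust_3)
    then show ?thesis
      unfolding sum_tri cw_def using psum
      by (auto simp: q1_def q2_def q3_def a1_def a2_def a3_def)
  qed
  have "l \<in> Lambda W"
    unfolding Lambda_def
  proof (intro CollectI conjI allI impI)
    fix D show "0 \<le> l D" using cw_nn by (simp add: l_def)
  next
    fix D assume "D \<notin> det_channels" then show "l D = 0" by (simp add: l_def)
  next
    show "(\<Sum>D\<in>det_channels. l D) = 1" unfolding sum_det lM by (rule sum1)
  next
    show "W = (\<Sum>D\<in>det_channels. l D *\<^sub>R D)"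
      unfolding sum_det lM
    proof (rule iffD2[OF vec_eq_iff], rule allI, rule iffD2[OF vec_eq_iff], rule allI)
      fix x :: 3 and y :: 2
      have "y = 1 \<or> y = 2" by (rule exhaust_2)
      then show "W $ x $ y = (\<Sum>t\<in>UNIV. cw t *\<^sub>R M t) $ x $ y"
      proof
        assume "y = 1" then show ?thesis using comp[of x] by simp
      next
        assume y2: "y = 2"
        have "(\<Sum>t\<in>UNIV. cw t * (if bit t x then 0 else 1)) = (\<Sum>t\<in>UNIV. cw t - cw t * (if bit t x then 1 else 0))"
          by (rule sum.cong) auto
        also have "\<dots> = 1 - W$x$1" using sum1 comp[of x] by (simp add: sum_subtractf)
        finally show ?thesis using y2 row(1)[of x] by simp
      qed
    qed
  qed
  moreover have "C11 l = 1"
  proof -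
    have h: "cw t * log 2 (real (rank (M t))) = cw t" for t
    proof (cases "t = (True,True,True) \<or> t = (False,False,False)")
      case True then show ?thesis by (auto simp: cw_def)
    next
      case False
      then obtain x y where "bit t x" "\<not> bit t y"
        by (metis (full_types) bit_simps prod.exhaust_sel)
      then have "rank (M t) = 2" by (rule rank_M2)
      then show ?thesis by simp
    qed
    show ?thesis unfolding C11_def sum_det lM h using sum1 .
  qed
  ultimately show ?thesis by blast
qed


theorem proposition24:
  fixes W :: "real^2^3"
  assumes "channel W"
    and "\<forall>x y x' y'. W$x$y = W$x'$y' \<longrightarrow> x = x' \<and> y = y'"
    and "\<forall>y. (\<Sum>x\<in>UNIV. W$x$y) \<ge> 1"
  shows "C01_bar W < C11_bar W"
proof -
  define a1 where "a1 = W$1$1"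
  define a2 where "a2 = W$2$1"
  define a3 where "a3 = W$3$1"
  define \<delta> where "\<delta> = min \<bar>a1+a2-1\<bar> (min \<bar>a1+a3-1\<bar> \<bar>a2+a3-1\<bar>)"
  have row: "W$x$2 = 1 - W$x$1" for x
    using assms(1) by (auto simp: channel_def sum_2 algebra_simps)
  have ne: "W$1$1 \<noteq> W$2$2" "W$1$1 \<noteq> W$3$2" "W$2$1 \<noteq> W$3$2"
  proof -
    have d: "(1::3) \<noteq> 2" "(1::3) \<noteq> 3" "(2::3) \<noteq> 3" by simp_all
    show "W$1$1 \<noteq> W$2$2" "W$1$1 \<noteq> W$3$2" "W$2$1 \<noteq> W$3$2" using assms(2) d by blast+
  qed
  have "\<delta> > 0" using ne unfolding \<delta>_def a1_def a2_def a3_def row by auto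
  have C01le: "C01 l \<le> 1 - \<delta>/36" if l: "l \<in> Lambda W" for l
  proof -
    note lf = Lambda_facts[OF l]
    have "(\<Sum>D\<in>det_channels. l D * mutual_info \<mu> D) \<le> 1 - \<delta>/36" if m: "\<mu> \<in> input_dists" for \<mu>
    proof -
      have m0: "\<forall>x. \<mu>$x \<ge> 0" and ms: "(\<Sum>x\<in>UNIV. \<mu>$x) = 1" using m by (auto simp: input_dists_def)
      have "(\<Sum>D\<in>det_channels. l D * mutual_info \<mu> D) = (\<Sum>t\<in>UNIV. l (M t) * hb (pt \<mu> t))"
        unfolding sum_det MI[OF m] ..
      also have "\<dots> \<le> (\<Sum>t\<in>UNIV. l (M t) * (1 - (1 - 2 * pt \<mu> t)^2/4))"
        by (intro sum_mono mult_left_mono hb_bound pt_range[OF m]) (use lf(1) in auto)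
      also have "\<dots> = (\<Sum>t\<in>UNIV. l (M t)) - (\<Sum>t\<in>UNIV. l (M t) * (1 - 2 * pt \<mu> t)^2) / 4"
        by (simp add: sum_subtractf sum_divide_distrib algebra_simps)
      also have "\<dots> \<le> 1 - \<delta>/36"
        using comb[OF lf(1) lf(2) lf(3)[of 1] lf(3)[of 2] lf(3)[of 3] m0 ms] lf(2)
        unfolding \<delta>_def a1_def a2_def a3_def by simp
      finally show ?thesis .
    qed
    moreover have "input_dists \<noteq> {}"
    proof -
      have "((\<chi> x. if x = 1 then 1 else 0) :: real^3) \<in> input_dists"
        by (simp add: input_dists_def sum_3)
      then show ?thesis by blast
    qed
    ultimately show ?thesis unfolding C01_def by (intro cSUP_least) auto
  qed
  obtain l0 where l0: "l0 \<in> Lambda W" "C11 l0 = 1" using witness[OF assms(1) assms(3)] by blast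
  have "C01_bar W \<le> 1 - \<delta>/36"
    unfolding C01_bar_def using l0(1) C01le by (intro cSUP_least) auto
  moreover have "C11_bar W \<ge> 1"
  proof -
    have "bdd_above (C11 ` Lambda W)" using C11_le by (intro bdd_aboveI2) blast
    then have "C11 l0 \<le> C11_bar W" unfolding C11_bar_def using l0(1) by (rule cSUP_upper2) simp
    then show ?thesis using l0(2) by simp
  qed
  ultimately show ?thesis using \<open>\<delta> > 0\<close> by linarith
qed

end
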